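(* For every sample size $n$, every sample $\mathbf{x}_1,\dots,\mathbf{x}_n\in\mathbb{R}$ and every $N\ge 0$, the Hermite series distribution function estimator satisfies $\sup_{x\in\mathbb{R}}|\hat F_N(x)|\le C N^{17/12}$ for all $N\ge1$, where $C$ is a constant not depending on $N$, $n$, the sample, or $x$; i.e. $\max_x|\hat F_N(x)|=O(N^{17/12})$ as $N\to\infty$. (The same holds for the estimator built from the $\mathbf{y}_i$.)
   Context: Hermite functions: $h_k(x)=(2^k k!\sqrt{\pi})^{-1/2}e^{-x^2/2}H_k(x)$ with $H_k(x)=(-1)^k e^{x^2}\frac{d^k}{dx^k}e^{-x^2}$. Given observations $\mathbf{x}_1,\dots,\mathbf{x}_n$, let $\hat a_k=\frac1n\sum_{i=1}^n h_k(\mathbf{x}_i)$ and $\hat F_N(x)=\sum_{k=0}^N\hat a_k\int_{-\infty}^x h_k(t)\,dt$. *)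

theory Defs
  imports "HOL-Analysis.Analysis"
begin

definition hermite_poly :: "nat \<Rightarrow> real \<Rightarrow> real" where
  "hermite_poly k x = (-1) ^ k * exp (x^2) * ((deriv ^^ k) (\<lambda>t. exp (-(t^2))) x)"

definition hermite_fun :: "nat \<Rightarrow> real \<Rightarrow> real" where
  "hermite_fun k x = (2 ^ k * fact k * sqrt pi) powr (-1/2) * exp (-(x^2) / 2) * hermite_poly k x"

definition hermite_coef_est :: "nat \<Rightarrow> (nat \<Rightarrow> real) \<Rightarrow> nat \<Rightarrow> real" where
  "hermite_coef_est n X k = (1 / real n) * (\<Sum>i=1..n. hermite_fun k (X i))"

definition hermite_cdf_est :: "nat \<Rightarrow> (nat \<Rightarrow> real) \<Rightarrow> nat \<Rightarrow> real \<Rightarrow> real" where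
  "hermite_cdf_est n X N x =
     (\<Sum>k=0..N. hermite_coef_est n X k * integral {..x} (hermite_fun k))"

end

theory Submission imports Defs "HOL-Computational_Algebra.Polynomial" "HOL-Probability.Distributions" "HOL-Probability.Sinc_Integral"
begin

fun Hp :: "nat \<Rightarrow> real poly" where
  "Hp 0 = 1"
| "Hp (Suc k) = [:0,2:] * Hp k - pderiv (Hp k)"

lemma deriv_Hp:
  "(deriv ^^ k) (\<lambda>t. exp (-(t^2))) = (\<lambda>t. (-1)^k * poly (Hp k) t * exp (-(t^2)))"
proof (induction k)
  case 0
  then show ?case by simp
next
  case (Suc k)
  have "deriv (\<lambda>t. (-1)^k * poly (Hp k) t * exp (-(t^2))) t = (-1)^(Suc k) * poly (Hp (Suc k)) t * exp (-(t^2))" for t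
  proof (rule DERIV_imp_deriv)
    show "((\<lambda>t. (-1)^k * poly (Hp k) t * exp (-(t^2))) has_real_derivative (-1)^(Suc k) * poly (Hp (Suc k)) t * exp (-(t^2))) (at t)"
      by (auto intro!: derivative_eq_intros poly_DERIV simp: algebra_simps)
  qed
  moreover have "(deriv ^^ Suc k) (\<lambda>t. exp (-(t^2))) = deriv (\<lambda>t. (-1)^k * poly (Hp k) t * exp (-(t^2)))" using Suc.IH by simp
  ultimately show ?case by (simp only: fun_eq_iff) simp
qed

lemma hermite_poly_eq: "hermite_poly k x = poly (Hp k) x"
proof -
  have m: "(-1::real)^k * (-1)^k = 1" by (simp flip: power_mult_distrib)
  have e: "exp (x^2) * exp (-(x^2)) = 1" by (simp flip: exp_add)
  have "hermite_poly k x = ((-1)^k * (-1)^k) * (exp (x^2) * exp (-(x^2))) * poly (Hp k) x"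
    unfolding hermite_poly_def deriv_Hp by (simp only: mult_ac)
  then show ?thesis by (simp only: m e mult_1)
qed

lemma pderiv_Hp: "pderiv (Hp k) = smult (2 * real k) (Hp (k - 1))"
proof (induction k)
  case 0
  then show ?case by simp
next
  case (Suc k)
  show ?case
  proof (cases k)
    case 0 then show ?thesis by (simp add: pderiv_pCons pderiv_mult)
  next
    case (Suc m)
    have e: "Hp k = [:0,2:] * Hp (k-1) - pderiv (Hp (k-1))" using Suc by simp
    have e2: "[:0,2:] * smult (2*real k) (Hp (k-1)) - smult (2*real k) (pderiv (Hp (k-1))) = smult (2*real k) (Hp k)"
      unfolding e by (simp add: smult_diff_right mult_smult_right)
    have "pderiv (Hp (Suc k)) = [:2:] * Hp k + [:0,2:] * pderiv (Hp k) - pderiv (pderiv (Hp k))"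
      by (simp add: pderiv_mult pderiv_diff pderiv_pCons pderiv_smult)
    also have "\<dots> = [:2:] * Hp k + ([:0,2:] * smult (2*real k) (Hp (k-1)) - smult (2*real k) (pderiv (Hp (k-1))))"
      by (simp only: Suc.IH pderiv_smult diff_conv_add_uminus add.assoc)
    also have "\<dots> = [:2:] * Hp k + smult (2 * real k) (Hp k)" by (simp only: e2)
    also have "\<dots> = smult (2 * real (Suc k)) (Hp k)" by (simp add: smult_add_left)
    finally show ?thesis by simp
  qed
qed

lemma nd1: "normal_density 0 (1/sqrt 2) x = exp (-(x^2)) / sqrt pi"
  by (auto simp: normal_density_def power_divide)

lemma nd2: "normal_density 0 1 x = exp (-(x^2)/2) / sqrt (2*pi)"
  by (auto simp: normal_density_def)

lemma int_mono1: "integrable lborel (\<lambda>x. exp (-(x^2)) * x^k :: real)"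
proof -
  have "integrable lborel (\<lambda>x. normal_density 0 (1/sqrt 2) x * (x - 0)^k)"
    by (rule integrable_normal_moment) simp
  hence "integrable lborel (\<lambda>x. sqrt pi * (normal_density 0 (1/sqrt 2) x * (x - 0)^k))"
    by (rule integrable_mult_right)
  then show ?thesis by (simp add: nd1)
qed

lemma int_mono2: "integrable lborel (\<lambda>x. exp (-(x^2)/2) * x^k :: real)"
proof -
  have "integrable lborel (\<lambda>x. normal_density 0 1 x * (x - 0)^k)"
    by (rule integrable_normal_moment) simp
  hence "integrable lborel (\<lambda>x. sqrt (2*pi) * (normal_density 0 1 x * (x - 0)^k))"
    by (rule integrable_mult_right)
  then show ?thesis by (simp add: nd2)
qed

lemma int_poly1: "integrable lborel (\<lambda>x. poly (p::real poly) x * exp (-(x^2)))"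
proof -
  have "integrable lborel (\<lambda>x. \<Sum>i\<le>degree p. coeff p i * (exp (-(x^2)) * x^i))"
    by (rule Bochner_Integration.integrable_sum, rule integrable_mult_right, rule int_mono1)
  moreover have "(\<lambda>x. poly p x * exp (-(x^2))) = (\<lambda>x. \<Sum>i\<le>degree p. coeff p i * (exp (-(x^2)) * x^i))"
    by (rule ext) (simp add: poly_altdef sum_distrib_right sum_distrib_left mult_ac)
  ultimately show ?thesis by simp
qed

lemma int_poly2: "integrable lborel (\<lambda>x. poly (p::real poly) x * exp (-(x^2)/2))"
proof -
  have "integrable lborel (\<lambda>x. \<Sum>i\<le>degree p. coeff p i * (exp (-(x^2)/2) * x^i))"
    by (rule Bochner_Integration.integrable_sum, rule integrable_mult_right, rule int_mono2)
  moreover have "(\<lambda>x. poly p x * exp (-(x^2)/2)) = (\<lambda>x. \<Sum>i\<le>degree p. coeff p i * (exp (-(x^2)/2) * x^i))"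
    by (rule ext) (simp add: poly_altdef sum_distrib_right sum_distrib_left mult_ac)
  ultimately show ?thesis by simp
qed

lemma lim_mono_top: "((\<lambda>x. x^i * exp (-(x^2)) :: real) \<longlongrightarrow> 0) at_top"
proof (rule tendsto_sandwich[of "\<lambda>_. 0" _ _ "\<lambda>x. x^i / exp x"])
  show "\<forall>\<^sub>F x in at_top. 0 \<le> x^i * exp (-(x^2::real))"
    by (auto simp: eventually_at_top_linorder intro!: exI[of _ "0::real"])
  show "\<forall>\<^sub>F x in at_top. x^i * exp (-(x^2)) \<le> x^i / exp (x::real)"
    unfolding eventually_at_top_linorder
  proof (rule exI[of _ 1], intro allI impI)
    fix x :: real assume elim: "1 \<le> x" 
    have "exp (-(x^2)) \<le> exp (-x)" using elim by (simp add: power2_eq_square)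
    hence "x^i * exp (-(x^2)) \<le> x^i * exp (-x)" using elim by (intro mult_left_mono) auto
    then show "x^i * exp (-(x^2)) \<le> x^i / exp x" by (simp add: exp_minus field_simps)
  qed
qed (auto intro: tendsto_power_div_exp_0)

lemma lim_poly_top: "((\<lambda>x. poly (q::real poly) x * exp (-(x^2)) :: real) \<longlongrightarrow> 0) at_top"
proof -
  have "((\<lambda>x. \<Sum>i\<le>degree q. coeff q i * (x^i * exp (-(x^2)))) \<longlongrightarrow> (\<Sum>i\<le>degree q. coeff q i * 0)) at_top"
    by (intro tendsto_sum tendsto_mult tendsto_const lim_mono_top)
  moreover have "(\<lambda>x. poly q x * exp (-(x^2))) = (\<lambda>x. \<Sum>i\<le>degree q. coeff q i * (x^i * exp (-(x^2))))"
    by (rule ext) (simp add: poly_altdef sum_distrib_right sum_distrib_left mult_ac)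
  ultimately show ?thesis by simp
qed

lemma lim_poly_bot: "((\<lambda>x. poly (q::real poly) x * exp (-(x^2)) :: real) \<longlongrightarrow> 0) at_bot"
proof -
  have "((\<lambda>x. poly (pcompose q [:0,-1:]) x * exp (-(x^2)) :: real) \<longlongrightarrow> 0) at_top"
    by (rule lim_poly_top)
  then show ?thesis unfolding filterlim_at_bot_mirror by (simp add: poly_pcompose)
qed

definition L :: "real poly \<Rightarrow> real" where
  "L p = (\<integral>x. poly p x * exp (-(x^2)) \<partial>lborel)"

lemma L_add: "L (p + q) = L p + L q"
  unfolding L_def by (simp add: distrib_right int_poly1)

lemma L_diff: "L (p - q) = L p - L q"
  unfolding L_def by (simp add: left_diff_distrib int_poly1)

lemma L_smult: "L (smult c p) = c * L p"
  unfolding L_def by (simp add: mult.assoc)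

lemma L_sum: "L (\<Sum>i\<in>I. p i) = (\<Sum>i\<in>I. L (p i))"
proof (induction I rule: infinite_finite_induct)
  case (infinite A) then show ?case by (simp add: L_def)
next
  case empty then show ?case by (simp add: L_def)
next
  case (insert x F) then show ?case by (simp add: L_add)
qed

lemma L_zero[simp]: "L 0 = 0" by (simp add: L_def)

lemma L_mono: "(\<And>x. poly p x \<le> poly q x) \<Longrightarrow> L p \<le> L q"
  unfolding L_def by (intro integral_mono int_poly1) (simp add: mult_right_mono)

lemma L_nonneg: "(\<And>x. 0 \<le> poly p x) \<Longrightarrow> 0 \<le> L p"
  using L_mono[of 0 p] by (simp add: L_def)

lemma L_one: "L 1 = sqrt pi"
proof -
  have "1 = (\<integral>x. normal_density 0 (1/sqrt 2) x \<partial>lborel)" by simp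
  also have "\<dots> = (\<integral>x. exp (-(x^2)) / sqrt pi \<partial>lborel)" by (simp only: nd1)
  also have "\<dots> = (\<integral>x. exp (-(x^2)) \<partial>lborel) / sqrt pi" by (rule integral_divide_zero)
  finally have "(\<integral>x. exp (-(x^2)) \<partial>lborel) = sqrt pi" by (simp add: eq_divide_eq)
  then show ?thesis by (simp add: L_def)
qed

lemma L_parts: "L (pderiv q) = L ([:0,2:] * q)"
proof -
  let ?F = "\<lambda>x. poly q x * exp (-(x^2))"
  let ?f = "\<lambda>x. poly (pderiv q - [:0,2:] * q) x * exp (-(x^2))"
  have "(LBINT x=-\<infinity>..\<infinity>. ?f x) = 0 - 0"
  proof (rule interval_integral_FTC_integrable)
    show "(?F has_vector_derivative ?f x) (at x)" for x
      unfolding has_real_derivative_iff_has_vector_derivative[symmetric]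
      by (auto intro!: derivative_eq_intros poly_DERIV simp: algebra_simps)
    show "isCont ?f x" for x by (intro continuous_intros)
    show "set_integrable lborel (einterval (-\<infinity>) \<infinity>) ?f"
      using int_poly1[of "pderiv q - [:0,2:] * q"] by (simp add: set_integrable_def)
    show "((?F \<circ> real_of_ereal) \<longlongrightarrow> 0) (at_right (-\<infinity>))"
      unfolding ereal_tendsto_simps by (rule lim_poly_bot)
    show "((?F \<circ> real_of_ereal) \<longlongrightarrow> 0) (at_left \<infinity>)"
      unfolding ereal_tendsto_simps by (rule lim_poly_top)
  qed simp
  hence "L (pderiv q - [:0,2:] * q) = 0"
    by (simp add: L_def interval_lebesgue_integral_def set_lebesgue_integral_def)
  then show ?thesis by (simp add: L_diff)
qed

lemma L_Hp: "L (p * Hp k) = L ((pderiv ^^ k) p)"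
proof (induction k arbitrary: p)
  case 0 then show ?case by simp
next
  case (Suc k)
  have "p * Hp (Suc k) = [:0,2:] * (p * Hp k) - p * pderiv (Hp k)"
    by (simp add: algebra_simps)
  hence "L (p * Hp (Suc k)) = L ([:0,2:] * (p * Hp k)) - L (p * pderiv (Hp k))"
    by (simp add: L_diff)
  also have "L ([:0,2:] * (p * Hp k)) = L (pderiv (p * Hp k))" by (simp add: L_parts)
  also have "pderiv (p * Hp k) = p * pderiv (Hp k) + pderiv p * Hp k"
    by (simp add: pderiv_mult algebra_simps)
  finally have "L (p * Hp (Suc k)) = L (pderiv p * Hp k)" by (simp add: L_add)
  also have "\<dots> = L ((pderiv ^^ k) (pderiv p))" by (rule Suc.IH)
  finally show ?case by (simp add: funpow_Suc_right del: funpow.simps)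
qed

lemma fact_aux: "(a::real) / fact (Suc n) * (2 * real (Suc n)) = 2 * a / fact n"
proof -
  have "fact (Suc n) = real (Suc n) * (fact n :: real)" by (simp del: of_nat_Suc)
  moreover have "(fact n :: real) > 0" by simp
  ultimately show ?thesis by (simp add: field_simps del: of_nat_Suc)
qed

lemma L_const: "L [:c:] = c * sqrt pi"
proof -
  have "[:c:] = smult c 1" by simp
  then show ?thesis by (simp only: L_smult L_one)
qed

lemma pderiv_iter_Hp: "m \<le> j \<Longrightarrow> (pderiv ^^ m) (Hp j) = smult (2^m * fact j / fact (j - m)) (Hp (j - m))"
proof (induction m)
  case 0 then show ?case by simp
next
  case (Suc m)
  hence IH: "(pderiv ^^ m) (Hp j) = smult (2^m * fact j / fact (j - m)) (Hp (j - m))" by simp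
  have jm: "j - m = Suc (j - Suc m)" using Suc.prems by simp
  have "(pderiv ^^ Suc m) (Hp j) = pderiv ((pderiv ^^ m) (Hp j))" by simp
  also have "\<dots> = smult (2^m * fact j / fact (j - m) * (2 * real (j - m))) (Hp (j - Suc m))"
    unfolding IH by (simp add: pderiv_smult pderiv_Hp)
  also have "2^m * fact j / fact (j - m) * (2 * real (j - m)) = (2^Suc m * fact j / fact (j - Suc m) :: real)"
    unfolding jm fact_aux by simp
  finally show ?case .
qed

lemma pderiv_iter_zero: "(pderiv ^^ n) (0::real poly) = 0"
  by (induction n) auto

lemma pderiv_iter_Hp_zero: "j < k \<Longrightarrow> (pderiv ^^ k) (Hp j) = 0"
proof -
  assume "j < k"
  then obtain n where k: "k = Suc n + j" by (metis add_Suc less_iff_Suc_add add.commute)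
  have "(pderiv ^^ k) (Hp j) = (pderiv ^^ n) (pderiv ((pderiv ^^ j) (Hp j)))"
    unfolding k funpow_add by (simp add: funpow_Suc_right del: funpow.simps)
  also have "(pderiv ^^ j) (Hp j) = smult (2^j * fact j) 1"
    using pderiv_iter_Hp[of j j] by simp
  finally show ?thesis by (simp add: pderiv_smult pderiv_iter_zero)
qed

definition nu :: "nat \<Rightarrow> real" where "nu k = 2^k * fact k * sqrt pi"

lemma nu_pos: "nu k > 0" by (simp add: nu_def)

lemma nu_Suc: "nu (Suc k) = 2 * real (Suc k) * nu k"
  by (simp add: nu_def)

lemma L_Hp_Hp: "L (Hp j * Hp k) = (if j = k then nu k else 0)"
proof (cases "j = k")
  case True
  have "L (Hp k * Hp k) = L ((pderiv ^^ k) (Hp k))" by (rule L_Hp)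
  also have "(pderiv ^^ k) (Hp k) = smult (2^k * fact k) 1" using pderiv_iter_Hp[of k k] by simp
  finally show ?thesis using True by (simp add: L_const nu_def)
next
  case False
  show ?thesis
  proof (cases "j < k")
    case True
    then show ?thesis using False L_Hp[of "Hp j" k] pderiv_iter_Hp_zero[of j k] by (simp add: L_def)
  next
    case F2: False
    then have "k < j" using False by simp
    then show ?thesis using False L_Hp[of "Hp k" j] pderiv_iter_Hp_zero[of k j] by (simp add: L_def mult.commute)
  qed
qed

lemma parseval:
  assumes "finite I"
  shows "L ((\<Sum>i\<in>I. smult (b i) (Hp i)) * (\<Sum>i\<in>I. smult (b i) (Hp i))) = (\<Sum>i\<in>I. (b i)^2 * nu i)"
proof -
  have "(\<Sum>i\<in>I. smult (b i) (Hp i)) * (\<Sum>i\<in>I. smult (b i) (Hp i)) = (\<Sum>i\<in>I. \<Sum>j\<in>I. smult (b i * b j) (Hp i * Hp j))"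
    by (simp add: sum_product mult_smult_left mult_smult_right mult.commute)
  hence "L ((\<Sum>i\<in>I. smult (b i) (Hp i)) * (\<Sum>i\<in>I. smult (b i) (Hp i))) = (\<Sum>i\<in>I. \<Sum>j\<in>I. b i * b j * (if i = j then nu j else 0))"
    by (simp add: L_sum L_smult L_Hp_Hp)
  also have "\<dots> = (\<Sum>i\<in>I. (b i)^2 * nu i)"
    using assms by (simp add: if_distrib power2_eq_square cong: if_cong)
  finally show ?thesis .
qed

lemma peq: "(\<And>x. poly p x = poly q x) \<Longrightarrow> p = (q :: real poly)"
  by (metis poly_eq_poly_eq_iff ext)

lemma pderiv_X: "pderiv [:0,1::real:] = 1"
  by (simp add: pderiv_pCons)

lemma L_sq_nonneg: "0 \<le> L (p * p)"
  by (rule L_nonneg) simp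

lemma key_bounds:
  fixes P :: "real poly"
  defines "Q \<equiv> pderiv P - [:0,1:] * P"
  shows "L ([:1,0,1:] * P * P) \<le> 2 * L (P * P) + L (pderiv P * pderiv P)"
    and "L (Q * Q) \<le> L (P * P) + L (pderiv P * pderiv P)"
proof -
  define X :: "real poly" where "X = [:0,1:]"
  define A where "A = L (X * X * P * P)"
  define B where "B = L (X * P * pderiv P)"
  define C where "C = L (P * P)"
  define D where "D = L (pderiv P * pderiv P)"
  have e1: "pderiv (X * P * P) = P * P + smult 2 (X * P * pderiv P)"
    by (rule peq) (simp add: X_def pderiv_mult pderiv_pCons algebra_simps)
  have e2: "[:0,2:] * (X * P * P) = smult 2 (X * X * P * P)"
    by (rule peq) (simp add: X_def algebra_simps)
  have f1: "C + 2 * B = 2 * A"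
    using L_parts[of "X * P * P"] unfolding e1 e2 by (simp add: L_add L_smult A_def B_def C_def)
  have e3: "Q * Q = pderiv P * pderiv P - smult 2 (X * P * pderiv P) + X * X * P * P"
    by (rule peq) (simp add: Q_def X_def algebra_simps power2_eq_square)
  have f2: "L (Q * Q) = D - 2 * B + A"
    unfolding e3 by (simp add: L_add L_diff L_smult B_def D_def A_def)
  have f3: "0 \<le> L (Q * Q)" by (rule L_sq_nonneg)
  have f4: "L ([:1,0,1:] * P * P) = C + A"
  proof -
    have "[:1,0,1:] * P * P = P * P + X * X * P * P"
      by (rule peq) (simp add: X_def algebra_simps)
    then show ?thesis by (simp add: L_add A_def C_def)
  qed
  have f5: "0 \<le> A"
  proof -
    have "X * X * P * P = (X * P) * (X * P)" by (simp add: algebra_simps)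
    then show ?thesis unfolding A_def using L_sq_nonneg[of "X * P"] by metis
  qed
  show "L ([:1,0,1:] * P * P) \<le> 2 * L (P * P) + L (pderiv P * pderiv P)"
    using f1 f2 f3 f4 unfolding C_def[symmetric] D_def[symmetric] by linarith
  show "L (Q * Q) \<le> L (P * P) + L (pderiv P * pderiv P)"
    using f1 f2 f5 unfolding C_def[symmetric] D_def[symmetric] by linarith
qed

lemma amgm: "0 < (s::real) \<Longrightarrow> \<bar>2 * a * b\<bar> \<le> s * a^2 + b^2 / s"
proof -
  assume s: "0 < s"
  have "0 \<le> (s * \<bar>a\<bar> - \<bar>b\<bar>)^2" by simp
  hence "2 * s * \<bar>a * b\<bar> \<le> s^2 * a^2 + b^2" by (simp add: power2_eq_square algebra_simps abs_mult)
  hence "s * \<bar>2 * a * b\<bar> \<le> s * (s * a^2 + b^2 / s)" using s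
    by (simp add: algebra_simps power2_eq_square abs_mult)
  thus ?thesis using s by (simp add: mult_le_cancel_left_pos)
qed

lemma pointwise:
  fixes P :: "real poly" and s :: real
  defines "Q \<equiv> pderiv P - [:0,1:] * P"
  assumes s: "0 < s"
  shows "(poly P x)^2 * exp (-(x^2)) \<le> s * L (P * P) + L (Q * Q) / s"
proof -
  define R where "R = smult 2 (P * Q)"
  let ?F = "\<lambda>t. poly (P * P) t * exp (-(t^2))"
  let ?f = "\<lambda>t. poly R t * exp (-(t^2))"
  have "(LBINT t=-\<infinity>..ereal x. ?f t) = ?F x - 0"
  proof (rule interval_integral_FTC_integrable)
    show "(?F has_vector_derivative ?f t) (at t)" for t
      unfolding has_real_derivative_iff_has_vector_derivative[symmetric]
      by (auto intro!: derivative_eq_intros poly_DERIV simp: R_def Q_def pderiv_mult algebra_simps)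
    show "isCont ?f t" for t by (intro continuous_intros)
    show "set_integrable lborel (einterval (-\<infinity>) (ereal x)) ?f"
      unfolding set_integrable_def by (rule integrable_mult_indicator) (auto simp: int_poly1)
    show "((?F \<circ> real_of_ereal) \<longlongrightarrow> 0) (at_right (-\<infinity>))"
      unfolding ereal_tendsto_simps by (rule lim_poly_bot)
    have "isCont ?F x" by (intro continuous_intros)
    hence "(?F \<longlongrightarrow> ?F x) (at x)" by (simp add: isCont_def)
    then show "((?F \<circ> real_of_ereal) \<longlongrightarrow> ?F x) (at_left (ereal x))"
      unfolding ereal_tendsto_simps using filterlim_at_split by blast
  qed simp
  hence eq: "?F x = (\<integral>t. indicator {..<x} t * ?f t \<partial>lborel)"
    by (simp add: interval_lebesgue_integral_def set_lebesgue_integral_def)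
  have "?F x \<le> \<bar>\<integral>t. indicator {..<x} t * ?f t \<partial>lborel\<bar>" unfolding eq by simp
  also have "\<dots> \<le> (\<integral>t. poly (smult s (P * P) + smult (1/s) (Q * Q)) t * exp (-(t^2)) \<partial>lborel)"
  proof (rule integral_abs_bound_integral)
    show "integrable lborel (\<lambda>t. indicator {..<x} t * ?f t)"
      using integrable_mult_indicator[of "{..<x}" lborel ?f] by (simp add: int_poly1)
    show "integrable lborel (\<lambda>t. poly (smult s (P * P) + smult (1/s) (Q * Q)) t * exp (-(t^2)))"
      by (rule int_poly1)
    fix t
    have "\<bar>indicator {..<x} t * ?f t\<bar> \<le> \<bar>?f t\<bar>" by (simp add: indicator_def abs_mult)
    also have "\<bar>?f t\<bar> = \<bar>2 * poly P t * poly Q t\<bar> * exp (-(t^2))"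
      by (simp add: R_def abs_mult)
    also have "\<dots> \<le> (s * (poly P t)^2 + (poly Q t)^2 / s) * exp (-(t^2))"
      by (rule mult_right_mono[OF amgm[OF s]]) simp
    also have "\<dots> = poly (smult s (P * P) + smult (1/s) (Q * Q)) t * exp (-(t^2))"
      by (simp add: power2_eq_square)
    finally show "\<bar>indicator {..<x} t * ?f t\<bar> \<le> poly (smult s (P * P) + smult (1/s) (Q * Q)) t * exp (-(t^2))" .
  qed
  also have "\<dots> = L (smult s (P * P) + smult (1/s) (Q * Q))" by (simp only: L_def)
  also have "\<dots> = s * L (P * P) + L (Q * Q) / s"
    by (simp add: L_add L_smult)
  finally show ?thesis by (simp add: power2_eq_square)
qed

definition cc :: "nat \<Rightarrow> real" where "cc k = nu k powr (-1/2)"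

lemma cc_sq: "(cc k)^2 * nu k = 1"
proof -
  have "(cc k)^2 = nu k powr (-1/2) * nu k powr (-1/2)" by (simp add: cc_def power2_eq_square)
  also have "\<dots> = nu k powr (-1)" by (simp add: powr_add[symmetric])
  also have "\<dots> = 1 / nu k" using nu_pos[of k] by (simp add: powr_minus_divide)
  finally show ?thesis using nu_pos[of k] by simp
qed

lemma hf_eq: "hermite_fun k x = cc k * (poly (Hp k) x * exp (-(x^2)/2))"
  by (simp add: hermite_fun_def hermite_poly_eq cc_def nu_def)

lemma hf_sq: "(hermite_fun k x)^2 \<le> 2 * sqrt (2 * real k + 1)"
proof -
  define P where "P = smult (cc k) (Hp k)"
  define Q where "Q = pderiv P - [:0,1:] * P"
  define s where "s = sqrt (2 * real k + 1)"
  have s: "0 < s" by (simp add: s_def)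
  have hx: "(hermite_fun k x)^2 = (poly P x)^2 * exp (-(x^2))"
  proof -
    have "exp (-(x^2)/2) ^ 2 = exp (-(x^2))" by (simp add: power2_eq_square exp_add[symmetric])
    then show ?thesis by (simp add: hf_eq P_def power_mult_distrib)
  qed
  have LPP: "L (P * P) = 1"
    using cc_sq[of k] by (simp add: P_def L_smult L_Hp_Hp power2_eq_square)
  have LDD: "L (pderiv P * pderiv P) = 2 * real k"
  proof (cases k)
    case 0 then show ?thesis by (simp add: P_def pderiv_smult pderiv_Hp)
  next
    case (Suc m)
    have km: "k - 1 = m" using Suc by simp
    have "pderiv P = smult (cc k * (2 * real k)) (Hp m)"
      unfolding P_def pderiv_smult pderiv_Hp km by simp
    hence "pderiv P * pderiv P = smult ((cc k * (2 * real k))^2) (Hp m * Hp m)"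
      by (simp add: power2_eq_square mult_ac)
    hence "L (pderiv P * pderiv P) = (cc k)^2 * (2 * real k) * (2 * real k * nu m)"
      by (simp add: L_smult L_Hp_Hp power_mult_distrib power2_eq_square)
    also have "2 * real k * nu m = nu k" using Suc nu_Suc by simp
    finally show ?thesis using cc_sq[of k] by (simp add: mult_ac)
  qed
  have "(poly P x)^2 * exp (-(x^2)) \<le> s * L (P * P) + L (Q * Q) / s"
    unfolding Q_def by (rule pointwise[OF s])
  also have "\<dots> \<le> s * 1 + (1 + 2 * real k) / s"
    using key_bounds(2)[of P] s unfolding LPP LDD Q_def[symmetric] by (simp add: divide_right_mono)
  also have "\<dots> = 2 * s"
    using s by (simp add: s_def field_simps)
  finally show ?thesis using hx s_def by simp
qed

lemma hf_abs: "\<bar>hermite_fun k x\<bar> \<le> sqrt (2 * sqrt (2 * real k + 1))"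
proof -
  have "sqrt ((hermite_fun k x)^2) \<le> sqrt (2 * sqrt (2 * real k + 1))"
    by (rule real_sqrt_le_mono[OF hf_sq])
  then show ?thesis by simp
qed

lemma coef_sq: "(hermite_coef_est n X k)^2 \<le> 2 * sqrt (2 * real k + 1)"
proof -
  define M where "M = sqrt (2 * sqrt (2 * real k + 1))"
  have M0: "0 \<le> M" by (simp add: M_def)
  have "\<bar>hermite_coef_est n X k\<bar> \<le> M"
  proof (cases "n = 0")
    case True then show ?thesis using M0 by (simp add: hermite_coef_est_def)
  next
    case False
    have "\<bar>\<Sum>i=1..n. hermite_fun k (X i)\<bar> \<le> (\<Sum>i=1..n. \<bar>hermite_fun k (X i)\<bar>)"
      by (rule sum_abs)
    also have "\<dots> \<le> of_nat (card {1..n}) * M"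
      by (rule sum_bounded_above) (simp add: M_def hf_abs)
    finally have "\<bar>\<Sum>i=1..n. hermite_fun k (X i)\<bar> \<le> real n * M" by simp
    then show ?thesis using False by (simp add: hermite_coef_est_def abs_mult field_simps)
  qed
  hence "(hermite_coef_est n X k)^2 \<le> M^2"
    by (metis abs_ge_zero power2_abs power_mono)
  also have "M^2 = 2 * sqrt (2 * real k + 1)" by (simp add: M_def)
  finally show ?thesis .
qed

lemma hint: "integral {..x} (hermite_fun k) = (\<integral>t. indicator {..x} t * hermite_fun k t \<partial>lborel)"
proof -
  have i1: "integrable lborel (hermite_fun k)"
    unfolding hf_eq[abs_def] by (intro integrable_mult_right int_poly2)
  have i2: "integrable lborel (\<lambda>t. indicator {..x} t * hermite_fun k t)"
    using integrable_mult_indicator[of "{..x}" lborel "hermite_fun k", OF _ i1] by simp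
  have "integral {..x} (hermite_fun k) = integral UNIV (\<lambda>t. if t \<in> {..x} then hermite_fun k t else 0)"
    by (rule integral_restrict_UNIV[symmetric])
  also have "(\<lambda>t. if t \<in> {..x} then hermite_fun k t else 0) = (\<lambda>t. indicator {..x} t * hermite_fun k t)"
    by (auto simp: indicator_def)
  also have "integral UNIV \<dots> = (\<integral>t. indicator {..x} t * hermite_fun k t \<partial>lborel)"
    by (rule integral_lborel[OF i2])
  finally show ?thesis .
qed

lemma pderiv_sum': "pderiv (\<Sum>i\<in>I. f i) = (\<Sum>i\<in>I. pderiv (f i :: real poly))"
  using higher_pderiv_sum[of 1 f I] by simp

lemma Qf_bound:
  fixes a :: "nat \<Rightarrow> real" and N :: nat
  assumes ha: "\<And>k. (a k)^2 \<le> 2 * sqrt (2 * real k + 1)"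
  defines "P \<equiv> \<Sum>k\<le>N. smult (a k * cc k) (Hp k)"
  shows "L ([:1,0,1:] * P * P) \<le> (2 * (real N + 1) + 2 * (real N)^2) * (2 * sqrt (2 * real N + 1))"
proof -
  define B where "B = 2 * sqrt (2 * real N + 1)"
  have hb: "(a k)^2 \<le> B" if "k \<le> N" for k
  proof -
    have "sqrt (2 * real k + 1) \<le> sqrt (2 * real N + 1)" using that by simp
    then show ?thesis using ha[of k] unfolding B_def by linarith
  qed
  have "L (P * P) = (\<Sum>k\<le>N. (a k * cc k)^2 * nu k)"
    unfolding P_def by (rule parseval) simp
  also have "\<dots> = (\<Sum>k\<le>N. (a k)^2)"
    by (rule sum.cong) (auto simp: power_mult_distrib cc_sq mult.assoc[symmetric] mult.assoc)
  also have "\<dots> \<le> of_nat (card {..N}) * B"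
    by (rule sum_bounded_above) (simp add: hb)
  finally have LPP: "L (P * P) \<le> (real N + 1) * B" by (simp add: add.commute)
  have "pderiv P = (\<Sum>k\<le>N. smult (a k * cc k * (2 * real k)) (Hp (k - 1)))"
    unfolding P_def pderiv_sum' by (simp add: pderiv_smult pderiv_Hp)
  also have "\<dots> = (\<Sum>j<N. smult (a (Suc j) * cc (Suc j) * (2 * real (Suc j))) (Hp j))"
    by (subst sum.atMost_shift) simp
  finally have dP: "pderiv P = \<dots>" .
  have "L (pderiv P * pderiv P) = (\<Sum>j<N. (a (Suc j) * cc (Suc j) * (2 * real (Suc j)))^2 * nu j)"
    unfolding dP by (rule parseval) simp
  also have "\<dots> = (\<Sum>j<N. (a (Suc j))^2 * (2 * real (Suc j)))"
  proof (rule sum.cong)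
    fix j
    have "(a (Suc j) * cc (Suc j) * (2 * real (Suc j)))^2 * nu j
        = (a (Suc j))^2 * (2 * real (Suc j)) * ((cc (Suc j))^2 * (2 * real (Suc j) * nu j))"
      by (simp add: power_mult_distrib power2_eq_square mult_ac)
    also have "2 * real (Suc j) * nu j = nu (Suc j)" by (simp add: nu_Suc)
    finally show "(a (Suc j) * cc (Suc j) * (2 * real (Suc j)))^2 * nu j = (a (Suc j))^2 * (2 * real (Suc j))"
      by (simp add: cc_sq)
  qed simp
  also have "\<dots> \<le> of_nat (card {..<N}) * (B * (2 * real N))"
  proof (rule sum_bounded_above)
    fix j assume "j \<in> {..<N}"
    hence j: "Suc j \<le> N" by simp
    show "(a (Suc j))^2 * (2 * real (Suc j)) \<le> B * (2 * real N)"
      by (rule mult_mono) (use hb[OF j] j in \<open>auto simp: B_def\<close>)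
  qed
  finally have LDD: "L (pderiv P * pderiv P) \<le> 2 * (real N)^2 * B" by (simp add: power2_eq_square mult_ac)
  have "L ([:1,0,1:] * P * P) \<le> 2 * L (P * P) + L (pderiv P * pderiv P)" by (rule key_bounds(1))
  also have "\<dots> \<le> 2 * ((real N + 1) * B) + 2 * (real N)^2 * B" using LPP LDD by linarith
  finally show ?thesis unfolding B_def by (simp add: algebra_simps)
qed

lemma final_arith:
  fixes M Q T Y :: real
  assumes M: "1 \<le> M" and Y: "Y = M powr (1/4)"
    and Qb: "Q \<le> (2 * (M + 1) + 2 * M^2) * (2 * sqrt (2 * M + 1))"
    and T: "T \<le> ((1 / Y^5) * Q + pi / (1 / Y^5)) / 2"
  shows "T \<le> 14 * M powr (17/12)"
proof -
  have Y1: "1 \<le> Y" using M unfolding Y by (simp add: ge_one_powr_ge_zero)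
  have Y4: "Y^4 = M" using M unfolding Y by (simp add: powr_power powr_powr[symmetric])
  have Y5: "Y^5 = M powr (5/4)" using M unfolding Y by (simp add: powr_power)
  have y4: "1 \<le> Y^4" using Y1 by (simp add: one_le_power)
  have e: "(2 * Y^2)^2 = 4 * Y^4" by (simp add: power_mult_distrib power_mult[symmetric])
  have "sqrt (2 * M + 1) \<le> sqrt ((2 * Y^2)^2)"
    unfolding e by (rule real_sqrt_le_mono) (use Y4 y4 in linarith)
  moreover have "sqrt ((2 * Y^2)^2) = 2 * Y^2" by (simp only: real_sqrt_abs) simp
  ultimately have sq: "sqrt (2 * M + 1) \<le> 2 * Y^2" by linarith
  have m1: "2 * (M + 1) + 2 * M^2 \<le> 6 * Y^8"
  proof -
    have "M \<le> M^2" using M by (simp add: power2_eq_square)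
    hence h1: "2 * (M + 1) + 2 * M^2 \<le> 6 * M^2" using M by (simp add: algebra_simps)
    have h2: "M^2 = Y^8" unfolding Y4[symmetric] by (simp add: power_mult[symmetric])
    show ?thesis using h1 unfolding h2 .
  qed
  have "(2 * (M + 1) + 2 * M^2) * (2 * sqrt (2 * M + 1)) \<le> 6 * Y^8 * (2 * (2 * Y^2))"
    by (rule mult_mono) (use m1 sq Y1 M in auto)
  hence "Q \<le> 6 * Y^8 * (2 * (2 * Y^2))" using Qb by linarith
  hence Qb2: "Q \<le> 24 * Y^10" by (simp add: algebra_simps power_add[symmetric])
  have Ypos: "0 < Y^5" using Y1 by simp
  have "(1 / Y^5) * Q \<le> (1 / Y^5) * (24 * Y^10)" using Qb2 Ypos by (simp add: divide_right_mono)
  also have "(1 / Y^5) * (24 * Y^10) = 24 * Y^5" using Ypos by (simp add: field_simps power_add[symmetric])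
  finally have a1: "(1 / Y^5) * Q \<le> 24 * Y^5" .
  have a2: "pi / (1 / Y^5) \<le> 4 * Y^5" using pi_less_4 Ypos by simp
  have "((1 / Y^5) * Q + pi / (1 / Y^5)) / 2 \<le> (24 * Y^5 + 4 * Y^5) / 2"
    by (intro divide_right_mono add_mono a1 a2) simp
  hence "T \<le> 14 * Y^5" using T by simp
  also have "Y^5 \<le> M powr (17/12)" unfolding Y5 using M by (intro powr_mono) auto
  finally show ?thesis by simp
qed

lemma int_ind_hf: "integrable lborel (\<lambda>t. indicator {..x} t * hermite_fun k t)"
proof -
  have i1: "integrable lborel (hermite_fun k)"
    unfolding hf_eq[abs_def] by (intro integrable_mult_right int_poly2)
  show ?thesis
    using integrable_mult_indicator[of "{..x}" lborel "hermite_fun k", OF _ i1] by simp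
qed

lemma inv_sq_int: "integrable lborel (\<lambda>t::real. inverse (1 + t^2))"
  and inv_sq_integral: "(\<integral>t. inverse (1 + t^2) \<partial>lborel) = pi"
proof -
  show "integrable lborel (\<lambda>t::real. inverse (1 + t^2))"
    using integrable_inverse_1_plus_square by (simp add: set_integrable_def)
  show "(\<integral>t. inverse (1 + t^2) \<partial>lborel) = pi"
    using LBINT_inverse_1_plus_square
    by (simp add: interval_lebesgue_integral_def set_lebesgue_integral_def)
qed

lemma amgm2:
  fixes s w f :: real
  assumes "0 < s" "0 < w"
  shows "\<bar>f\<bar> \<le> (s * w * f^2 + 1 / (s * w)) / 2"
proof -
  have sw: "0 < s * w" using assms by simp
  have "0 \<le> (s * w * \<bar>f\<bar> - 1)^2" by simp
  hence "2 * (s * w) * \<bar>f\<bar> \<le> (s * w)^2 * f^2 + 1"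
    by (simp add: power2_eq_square algebra_simps)
  hence "(s * w) * (2 * \<bar>f\<bar>) \<le> (s * w) * (s * w * f^2 + 1 / (s * w))"
    using sw by (simp add: algebra_simps power2_eq_square)
  hence "2 * \<bar>f\<bar> \<le> s * w * f^2 + 1 / (s * w)"
    using sw by (simp add: mult_le_cancel_left_pos)
  thus ?thesis by simp
qed

theorem lemma1:
  shows "\<exists>C::real. \<forall>(n::nat) (X::nat \<Rightarrow> real) (N::nat) (x::real).
           N \<ge> 1 \<longrightarrow> \<bar>hermite_cdf_est n X N x\<bar> \<le> C * real N powr (17/12)"
proof (intro exI[of _ 14] allI impI)
  fix n :: nat and X :: "nat \<Rightarrow> real" and N :: nat and x :: real
  assume N: "1 \<le> N"
  define a where "a k = hermite_coef_est n X k" for k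
  define P where "P = (\<Sum>k\<le>N. smult (a k * cc k) (Hp k))"
  define phi where "phi t = poly P t * exp (-(t^2)/2)" for t
  define Y where "Y = real N powr (1/4)"
  define s where "s = 1 / Y^5"
  have Y1: "1 \<le> Y" using N unfolding Y_def by (simp add: ge_one_powr_ge_zero)
  have s: "0 < s" using Y1 by (simp add: s_def)
  have phisum: "phi t = (\<Sum>k\<le>N. a k * hermite_fun k t)" for t
    by (simp add: phi_def P_def poly_sum hf_eq sum_distrib_left sum_distrib_right mult_ac)
  have iphi: "integrable lborel (\<lambda>t. indicator {..x} t * phi t)"
  proof -
    have "integrable lborel phi" unfolding phi_def[abs_def] by (rule int_poly2)
    then show ?thesis using integrable_mult_indicator[of "{..x}" lborel phi] by simp
  qed
  have step1: "hermite_cdf_est n X N x = (\<integral>t. indicator {..x} t * phi t \<partial>lborel)"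
  proof -
    have "hermite_cdf_est n X N x = (\<Sum>k\<le>N. a k * (\<integral>t. indicator {..x} t * hermite_fun k t \<partial>lborel))"
      unfolding hermite_cdf_est_def a_def hint by (simp add: atLeast0AtMost)
    also have "\<dots> = (\<Sum>k\<le>N. (\<integral>t. a k * (indicator {..x} t * hermite_fun k t) \<partial>lborel))"
      by simp
    also have "\<dots> = (\<integral>t. (\<Sum>k\<le>N. a k * (indicator {..x} t * hermite_fun k t)) \<partial>lborel)"
      by (rule Bochner_Integration.integral_sum[symmetric]) (intro integrable_mult_right int_ind_hf)
    also have "\<dots> = (\<integral>t. indicator {..x} t * phi t \<partial>lborel)"
      by (rule Bochner_Integration.integral_cong) (simp_all add: phisum sum_distrib_left mult_ac)
    finally show ?thesis .
  qed
  define g where "g t = (s * (poly ([:1,0,1:] * P * P) t * exp (-(t^2))) + inverse (1 + t^2) / s) / 2" for t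
  have ig: "integrable lborel g"
    unfolding g_def
    by (rule integrable_divide, rule Bochner_Integration.integrable_add, rule integrable_mult_right,
        rule int_poly1, rule integrable_divide, rule inv_sq_int)
  have "\<bar>hermite_cdf_est n X N x\<bar> \<le> (\<integral>t. g t \<partial>lborel)"
    unfolding step1
  proof (rule integral_abs_bound_integral[OF iphi ig])
    fix t :: real
    have w: "0 < 1 + t^2" by (simp add: add_pos_nonneg)
    have "\<bar>indicator {..x} t * phi t\<bar> \<le> \<bar>phi t\<bar>" by (simp add: indicator_def)
    also have "\<dots> \<le> (s * (1 + t^2) * (phi t)^2 + 1 / (s * (1 + t^2))) / 2"
      by (rule amgm2[OF s w])
    also have "\<dots> = g t"
    proof -
      have "exp (-(t^2)/2) ^ 2 = exp (-(t^2))" by (simp add: power2_eq_square exp_add[symmetric])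
      hence "(1 + t^2) * (phi t)^2 = poly ([:1,0,1:] * P * P) t * exp (-(t^2))"
        by (simp add: phi_def power_mult_distrib power2_eq_square algebra_simps)
      moreover have "1 / (s * (1 + t^2)) = inverse (1 + t^2) / s" by (simp add: field_simps)
      ultimately show ?thesis unfolding g_def by (simp add: mult.assoc)
    qed
    finally show "\<bar>indicator {..x} t * phi t\<bar> \<le> g t" .
  qed
  also have "(\<integral>t. g t \<partial>lborel) = ((\<integral>t. s * (poly ([:1,0,1:] * P * P) t * exp (-(t^2))) \<partial>lborel)
      + (\<integral>t. inverse (1 + t^2) / s \<partial>lborel)) / 2"
    unfolding g_def
    by (simp only: integral_divide_zero Bochner_Integration.integral_add[OF integrable_mult_right[OF int_poly1] integrable_divide[OF inv_sq_int]])
  also have "\<dots> = (s * L ([:1,0,1:] * P * P) + pi / s) / 2"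
    by (simp only: integral_mult_right_zero integral_divide_zero inv_sq_integral L_def)
  finally have T: "\<bar>hermite_cdf_est n X N x\<bar> \<le> ((1 / Y^5) * L ([:1,0,1:] * P * P) + pi / (1 / Y^5)) / 2"
    unfolding s_def .
  have Qb: "L ([:1,0,1:] * P * P) \<le> (2 * (real N + 1) + 2 * (real N)^2) * (2 * sqrt (2 * real N + 1))"
    unfolding P_def by (rule Qf_bound) (simp add: a_def coef_sq)
  show "\<bar>hermite_cdf_est n X N x\<bar> \<le> 14 * real N powr (17/12)"
    by (rule final_arith[OF _ Y_def Qb T]) (use N in simp)
qed

end
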